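(* Let $G$ be a connected graph and $T$ a rooted spanning tree of $G$ whose vertices are identified with their preorder labels. Consider the following marking process. For each cross edge $(u,v)$ with $u\le v$, both endpoints $u$ and $v$ receive a message "Mark up to $\mathrm{LCA}(u,v)$" (carrying the pair $(u,v)$). Each vertex $w$ waits until it has received all messages destined for it from its children in $T$ and from its incident cross edges; if the received messages are "Mark up to $\mathrm{LCA}(u_i,v_i)$" for $i=1,\dots,k$ (with $k\ge1$), it computes $u_{\min}=\min_i u_i$ and $v_{\max}=\max_i v_i$; if $w$ is an ancestor of both $u_{\min}$ and $v_{\max}$ it sends nothing; otherwise it sends "Mark up to $\mathrm{LCA}(u_{\min},v_{\max})$" to its parent and marks the edge joining $w$ to its parent. (A vertex receiving no message sends nothing.) Then this process correctly marks $\mathrm{Chain}(\mathrm{LCA}(u,v),u)$ and $\mathrm{Chain}(\mathrm{LCA}(u,v),v)$ for every cross edge $(u,v)$: the set of marked edges is exactly $\bigcup_{(u,v)} \big(\mathrm{Chain}(\mathrm{LCA}(u,v),u)\cup\mathrm{Chain}(\mathrm{LCA}(u,v),v)\big)$, the union over all cross edges.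
   Context: Cross edges are the edges of $G$ not in $T$. Preorder labeling of $T$: the root receives label $1$; whenever a vertex receives label $\ell$, its children are ordered arbitrarily as $c_1,\dots,c_k$ and child $c_i$ receives label $\ell+1+\sum_{j<i}\#\mathrm{desc}(c_j)$, where $\#\mathrm{desc}(c)$ is the number of descendants of $c$ (including $c$); $\le$, $\min$, $\max$ refer to labels. Every vertex is an ancestor of itself; $\mathrm{LCA}(u,v)$ is the lowest common ancestor in $T$. When $v'$ is an ancestor of $v$, $\mathrm{Chain}(v',v)$ is the set of edges on the tree path from $v'$ to $v$. *)

theory Defs
  imports Main
begin

text \<open>Vertices are the preorder labels 1..n; the root is 1. The rooted spanning
tree T is given by a parent function par (par v is the parent of v for v in 2..n;
the value par 1 is irrelevant).\<close>

definition anc :: "(nat \<Rightarrow> nat) \<Rightarrow> nat \<Rightarrow> nat \<Rightarrow> bool" where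
  "anc par a v \<longleftrightarrow> (\<exists>k. (par ^^ k) v = a \<and> (\<forall>j<k. (par ^^ j) v \<noteq> 1))"

definition rooted_tree :: "nat \<Rightarrow> (nat \<Rightarrow> nat) \<Rightarrow> bool" where
  "rooted_tree n par \<longleftrightarrow> 1 \<le> n \<and> (\<forall>v\<in>{2..n}. par v \<in> {1..n})
     \<and> (\<forall>v\<in>{1..n}. anc par 1 v)"

definition children :: "(nat \<Rightarrow> nat) \<Rightarrow> nat \<Rightarrow> nat \<Rightarrow> nat set" where
  "children par n w = {c \<in> {2..n}. par c = w}"

definition ndesc :: "(nat \<Rightarrow> nat) \<Rightarrow> nat \<Rightarrow> nat \<Rightarrow> nat" where
  "ndesc par n c = card {x \<in> {1..n}. anc par c x}"

text \<open>Preorder labelling: root gets 1 (built in), and the children of a vertex w,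
listed in increasing order, get labels w + 1 + sum of the subtree sizes of the
earlier children.\<close>
definition preorder_labeled :: "(nat \<Rightarrow> nat) \<Rightarrow> nat \<Rightarrow> bool" where
  "preorder_labeled par n \<longleftrightarrow>
     (\<forall>w\<in>{1..n}. \<forall>c\<in>children par n w.
        c = w + 1 + (\<Sum>c'\<in>{c' \<in> children par n w. c' < c}. ndesc par n c'))"

definition tree_edges :: "(nat \<Rightarrow> nat) \<Rightarrow> nat \<Rightarrow> nat set set" where
  "tree_edges par n = {{par v, v} | v. v \<in> {2..n}}"

definition cross_edges :: "nat set set \<Rightarrow> (nat \<Rightarrow> nat) \<Rightarrow> nat \<Rightarrow> nat set set" where
  "cross_edges E par n = E - tree_edges par n"

definition LCA :: "(nat \<Rightarrow> nat) \<Rightarrow> nat \<Rightarrow> nat \<Rightarrow> nat \<Rightarrow> nat" where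
  "LCA par n u v = (THE a. a \<in> {1..n} \<and> anc par a u \<and> anc par a v \<and>
      (\<forall>b\<in>{1..n}. anc par b u \<and> anc par b v \<longrightarrow> anc par b a))"

definition Chain :: "(nat \<Rightarrow> nat) \<Rightarrow> nat \<Rightarrow> nat \<Rightarrow> nat set set" where
  "Chain par a v = {{par x, x} | x. anc par a x \<and> anc par x v \<and> x \<noteq> a}"

text \<open>Messages received by w: one (u,v) for each incident cross edge {u,v}, u<v,
and the messages sent by its children (out c = Some m means c sends m to its parent).\<close>
definition inbox :: "nat set set \<Rightarrow> (nat \<Rightarrow> nat) \<Rightarrow> nat \<Rightarrow> (nat \<Rightarrow> (nat \<times> nat) option)
     \<Rightarrow> nat \<Rightarrow> (nat \<times> nat) set" where
  "inbox E par n out w =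
     {(u, v). {u, v} \<in> cross_edges E par n \<and> u < v \<and> (w = u \<or> w = v)}
     \<union> {m. \<exists>c\<in>children par n w. out c = Some m}"

definition process_out :: "nat set set \<Rightarrow> (nat \<Rightarrow> nat) \<Rightarrow> nat \<Rightarrow> (nat \<Rightarrow> (nat \<times> nat) option)
     \<Rightarrow> nat \<Rightarrow> (nat \<times> nat) option" where
  "process_out E par n out w =
     (let M = inbox E par n out w in
      if M = {} then None
      else (let umin = Min (fst ` M); vmax = Max (snd ` M) in
            if anc par w umin \<and> anc par w vmax then None else Some (umin, vmax)))"

definition marked :: "(nat \<Rightarrow> nat) \<Rightarrow> nat \<Rightarrow> (nat \<Rightarrow> (nat \<times> nat) option) \<Rightarrow> nat set set" where
  "marked par n out = {{w, par w} | w. w \<in> {1..n} \<and> out w \<noteq> None}"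

end

theory Submission
  imports Defs
begin

lemma anc_unfold: "anc par a v \<longleftrightarrow> a = v \<or> (v \<noteq> 1 \<and> anc par a (par v))"
proof
  assume "anc par a v"
  then obtain k where k: "(par^^k) v = a" "\<forall>j<k. (par^^j) v \<noteq> 1" by (auto simp: anc_def)
  show "a = v \<or> (v \<noteq> 1 \<and> anc par a (par v))"
  proof (cases k)
    case 0 then show ?thesis using k by simp
  next
    case (Suc m)
    have "v \<noteq> 1" using k(2) Suc by (metis funpow_0 zero_less_Suc)
    moreover have "(par^^m) (par v) = a" using k(1) Suc by (metis comp_apply funpow_Suc_right)
    moreover have "\<forall>j<m. (par^^j) (par v) \<noteq> 1" using k(2) Suc by (metis Suc_mono comp_apply funpow_Suc_right)
    ultimately show ?thesis unfolding anc_def by blast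
  qed
next
  assume "a = v \<or> (v \<noteq> 1 \<and> anc par a (par v))"
  then show "anc par a v"
  proof
    assume "a = v" then show ?thesis unfolding anc_def by (intro exI[of _ 0]) auto
  next
    assume h: "v \<noteq> 1 \<and> anc par a (par v)"
    then obtain k where k: "(par^^k) (par v) = a" "\<forall>j<k. (par^^j) (par v) \<noteq> 1" by (auto simp: anc_def)
    have "(par^^Suc k) v = a" using k(1) by (metis comp_apply funpow_Suc_right)
    moreover have "\<forall>j<Suc k. (par^^j) v \<noteq> 1"
    proof (intro allI impI)
      fix j assume j: "j < Suc k"
      show "(par^^j) v \<noteq> 1"
      proof (cases j)
        case 0 then show ?thesis using h by simp
      next
        case (Suc i) then show ?thesis using k(2) j by (metis Suc_less_SucD comp_apply funpow_Suc_right)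
      qed
    qed
    ultimately show ?thesis unfolding anc_def by blast
  qed
qed

lemma anc_induct[consumes 1, case_names base step]:
  assumes "anc par a v" "P a" "\<And>x. x \<noteq> 1 \<Longrightarrow> anc par a (par x) \<Longrightarrow> P (par x) \<Longrightarrow> P x"
  shows "P v"
proof -
  obtain k where k: "(par^^k) v = a" "\<forall>j<k. (par^^j) v \<noteq> 1" using assms(1) by (auto simp: anc_def)
  then show ?thesis
  proof (induction k arbitrary: v)
    case 0 then show ?case using assms(2) by simp
  next
    case (Suc k)
    have v1: "v \<noteq> 1" using Suc.prems(2) by (metis funpow_0 zero_less_Suc)
    have a: "(par^^k) (par v) = a" using Suc.prems(1) by (metis comp_apply funpow_Suc_right)
    have b: "\<forall>j<k. (par^^j) (par v) \<noteq> 1" using Suc.prems(2) by (metis Suc_mono comp_apply funpow_Suc_right)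
    have "P (par v)" using Suc.IH[OF a b] .
    moreover have "anc par a (par v)" using a b unfolding anc_def by blast
    ultimately show ?case using assms(3) v1 by blast
  qed
qed

lemma anc_refl: "anc par a a"
  unfolding anc_def by (intro exI[of _ 0]) auto

lemma anc_par: "v \<noteq> 1 \<Longrightarrow> anc par (par v) v"
  using anc_unfold anc_refl by metis

lemma anc_trans: assumes "anc par a b" "anc par b c" shows "anc par a c"
  using assms(2)
proof (induct rule: anc_induct)
  case base then show ?case using assms(1) .
next
  case (step x) then show ?case using anc_unfold by metis
qed

lemma anc_linear: assumes "anc par a v" "anc par b v" shows "anc par a b \<or> anc par b a"
proof -
  have "anc par b v \<longrightarrow> anc par a b \<or> anc par b a"
    using assms(1)
  proof (induct rule: anc_induct)
    case base then show ?case by blast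
  next
    case (step x)
    show ?case
    proof
      assume "anc par b x"
      then have "b = x \<or> anc par b (par x)" using anc_unfold by metis
      then show "anc par a b \<or> anc par b a"
      proof
        assume "b = x" then show ?thesis using step anc_unfold by metis
      qed (use step in blast)
    qed
  qed
  then show ?thesis using assms(2) by blast
qed

locale tr =
  fixes n :: nat and par :: "nat \<Rightarrow> nat"
  assumes rt: "rooted_tree n par" and pl: "preorder_labeled par n"
begin

lemma par_less: assumes "v \<in> {2..n}" shows "par v < v \<and> par v \<in> {1..n}"
proof -
  have pr: "par v \<in> {1..n}" using rt assms unfolding rooted_tree_def by blast
  have "v \<in> children par n (par v)" using assms unfolding children_def by simp
  then have "v = par v + 1 + (\<Sum>c'\<in>{c' \<in> children par n (par v). c' < v}. ndesc par n c')"
    using pl pr unfolding preorder_labeled_def by blast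
  then show ?thesis using pr by linarith
qed

lemma anc_le: assumes "anc par a v" "v \<in> {1..n}" shows "a \<le> v \<and> a \<in> {1..n}"
proof -
  have "v \<in> {1..n} \<longrightarrow> a \<le> v \<and> a \<in> {1..n}"
    using assms(1)
  proof (induct rule: anc_induct)
    case base then show ?case by simp
  next
    case (step x)
    show ?case
    proof
      assume "x \<in> {1..n}"
      then have "x \<in> {2..n}" using step by auto
      then have "par x < x \<and> par x \<in> {1..n}" using par_less by blast
      then show "a \<le> x \<and> a \<in> {1..n}" using step by auto
    qed
  qed
  then show ?thesis using assms(2) by blast
qed

lemma anc_antisym: assumes "anc par a b" "anc par b a" "b \<in> {1..n}" shows "a = b"
  using anc_le[OF assms(1,3)] anc_le[of b a] assms by force

lemma child_exists: assumes "anc par w x" "x \<noteq> w" "x \<in> {1..n}"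
  shows "\<exists>c\<in>children par n w. anc par c x"
proof -
  have "x \<noteq> w \<longrightarrow> x \<in> {1..n} \<longrightarrow> (\<exists>c\<in>children par n w. anc par c x)"
    using assms(1)
  proof (induct rule: anc_induct)
    case base then show ?case by simp
  next
    case (step y)
    show ?case
    proof (intro impI)
      assume y: "y \<noteq> w" "y \<in> {1..n}"
      then have y2: "y \<in> {2..n}" using step by auto
      then have py: "par y < y \<and> par y \<in> {1..n}" using par_less by blast
      show "\<exists>c\<in>children par n w. anc par c y"
      proof (cases "par y = w")
        case True
        then have "y \<in> children par n w" using y2 unfolding children_def by simp
        then show ?thesis using anc_refl by blast
      next
        case False
        then obtain c where "c \<in> children par n w" "anc par c (par y)" using step py by blast
        then show ?thesis using anc_unfold step(1) by metis
      qed
    qed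
  qed
  then show ?thesis using assms by blast
qed

lemma child_props: assumes "c \<in> children par n w"
  shows "c \<in> {2..n}" "par c = w" "w < c" "anc par w c"
proof -
  show c2: "c \<in> {2..n}" and "par c = w" using assms unfolding children_def by auto
  then show "w < c" using par_less by blast
  show "anc par w c" using anc_par[of c par] c2 \<open>par c = w\<close> by auto
qed

lemma finite_children: "finite (children par n w)"
  unfolding children_def by auto

lemma ndesc_sum: assumes w: "w \<in> {1..n}"
  shows "1 + (\<Sum>c\<in>children par n w. ndesc par n c) \<le> ndesc par n w"
proof -
  define U where "U = (\<Union>c\<in>children par n w. {x \<in> {1..n}. anc par c x})"
  have disj: "\<forall>c1\<in>children par n w. \<forall>c2\<in>children par n w. c1 \<noteq> c2 \<longrightarrow>
      {x \<in> {1..n}. anc par c1 x} \<inter> {x \<in> {1..n}. anc par c2 x} = {}"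
  proof (intro ballI impI)
    fix c1 c2 assume c: "c1 \<in> children par n w" "c2 \<in> children par n w" "c1 \<noteq> c2"
    show "{x \<in> {1..n}. anc par c1 x} \<inter> {x \<in> {1..n}. anc par c2 x} = {}"
    proof (rule ccontr)
      assume "\<not> ?thesis"
      then obtain x where "anc par c1 x" "anc par c2 x" by blast
      then have "anc par c1 c2 \<or> anc par c2 c1" using anc_linear by metis
      moreover have False if "anc par a b" "a \<noteq> b" "a \<in> children par n w" "b \<in> children par n w" for a b
      proof -
        have "anc par a (par b)" using that anc_unfold by metis
        then have "anc par a w" using child_props(2)[OF that(4)] by simp
        then have "a \<le> w" using anc_le w by blast
        then show False using child_props(3)[OF that(3)] by simp
      qed
      ultimately show False using c by metis
    qed
  qed
  have cardU: "card U = (\<Sum>c\<in>children par n w. ndesc par n c)"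
    unfolding U_def ndesc_def
    by (rule card_UN_disjoint) (use finite_children disj in auto)
  have wU: "w \<notin> U"
  proof
    assume "w \<in> U"
    then obtain c where "c \<in> children par n w" "anc par c w" unfolding U_def by blast
    then show False using anc_le[of c w] w child_props(3) by fastforce
  qed
  have sub: "insert w U \<subseteq> {x \<in> {1..n}. anc par w x}"
    unfolding U_def using w anc_refl anc_trans child_props(4) by blast
  have fU: "finite U" unfolding U_def using finite_children by auto
  have "card (insert w U) \<le> ndesc par n w"
    unfolding ndesc_def by (rule card_mono[OF _ sub]) simp
  then show ?thesis using cardU wU fU by simp
qed

lemma desc_bound: assumes "w \<in> {1..n}" "anc par w x" "x \<in> {1..n}"
  shows "x < w + ndesc par n w"
  using assms
proof (induction "n - w" arbitrary: w rule: less_induct)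
  case less
  show ?case
  proof (cases "x = w")
    case True
    have "w \<in> {x \<in> {1..n}. anc par w x}" using less.prems anc_refl by blast
    then have "ndesc par n w > 0" unfolding ndesc_def by (simp add: card_gt_0_iff) blast
    then show ?thesis using True by simp
  next
    case False
    then obtain c where c: "c \<in> children par n w" "anc par c x" using child_exists less.prems by blast
    note cp = child_props[OF c(1)]
    have "x < c + ndesc par n c"
      using less.hyps[of c] cp c(2) less.prems by force
    moreover have "c = w + 1 + (\<Sum>c'\<in>{c' \<in> children par n w. c' < c}. ndesc par n c')"
      using pl less.prems(1) c(1) unfolding preorder_labeled_def by blast
    moreover have "(\<Sum>c'\<in>{c' \<in> children par n w. c' < c}. ndesc par n c') + ndesc par n c
        \<le> (\<Sum>c'\<in>children par n w. ndesc par n c')"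
    proof -
      have "(\<Sum>c'\<in>{c' \<in> children par n w. c' < c}. ndesc par n c') + ndesc par n c
          = (\<Sum>c'\<in>insert c {c' \<in> children par n w. c' < c}. ndesc par n c')"
        using finite_children by simp
      also have "\<dots> \<le> (\<Sum>c'\<in>children par n w. ndesc par n c')"
        by (rule sum_mono2) (use finite_children c(1) in auto)
      finally show ?thesis .
    qed
    moreover have "1 + (\<Sum>c\<in>children par n w. ndesc par n c) \<le> ndesc par n w"
      using ndesc_sum less.prems(1) by blast
    ultimately show ?thesis by linarith
  qed
qed

lemma convex: assumes w: "w \<in> {1..n}" and "anc par w y" "y \<in> {1..n}" "w \<le> x" "x \<le> y"
  shows "anc par w x"
proof -
  let ?D = "{x \<in> {1..n}. anc par w x}"
  have sub: "?D \<subseteq> {w..<w + ndesc par n w}"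
    using desc_bound[OF w] anc_le by auto
  have "card ?D = card {w..<w + ndesc par n w}" unfolding ndesc_def by simp
  then have eq: "?D = {w..<w + ndesc par n w}"
    using card_subset_eq[OF _ sub] by simp
  have "y \<in> ?D" using assms by blast
  then have "y < w + ndesc par n w" using eq by auto
  then have "x \<in> {w..<w + ndesc par n w}" using assms by auto
  then show ?thesis using eq by blast
qed
end

definition Sset :: "nat set set \<Rightarrow> (nat \<Rightarrow> nat) \<Rightarrow> nat \<Rightarrow> nat \<Rightarrow> (nat \<times> nat) set" where
  "Sset E par n w = {(u, v). {u, v} \<in> cross_edges E par n \<and> u < v \<and> (anc par w u \<or> anc par w v)}"

definition lv :: "nat set set \<Rightarrow> (nat \<Rightarrow> nat) \<Rightarrow> nat \<Rightarrow> nat \<Rightarrow> bool" where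
  "lv E par n w \<longleftrightarrow> (\<exists>u v. (u, v) \<in> Sset E par n w \<and> \<not> (anc par w u \<and> anc par w v))"

context tr
begin

lemma lca_props: assumes u: "u \<in> {1..n}" and v: "v \<in> {1..n}"
  shows "LCA par n u v \<in> {1..n} \<and> anc par (LCA par n u v) u \<and> anc par (LCA par n u v) v \<and>
      (\<forall>b\<in>{1..n}. anc par b u \<and> anc par b v \<longrightarrow> anc par b (LCA par n u v))"
proof -
  let ?P = "\<lambda>a. a \<in> {1..n} \<and> anc par a u \<and> anc par a v \<and>
      (\<forall>b\<in>{1..n}. anc par b u \<and> anc par b v \<longrightarrow> anc par b a)"
  let ?C = "{a \<in> {1..n}. anc par a u \<and> anc par a v}"
  have "1 \<in> ?C" using rt u v unfolding rooted_tree_def by auto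
  moreover have fC: "finite ?C" by auto
  ultimately have a0: "Max ?C \<in> ?C" using Max_in by blast
  have "?P (Max ?C)"
  proof -
    have "anc par b (Max ?C)" if b: "b \<in> ?C" for b
    proof -
      have "anc par (Max ?C) b \<or> anc par b (Max ?C)" using anc_linear a0 b by blast
      moreover have "b \<le> Max ?C" using fC b by simp
      moreover have "anc par (Max ?C) b \<Longrightarrow> Max ?C \<le> b" using anc_le b by blast
      ultimately show ?thesis using anc_refl by (metis le_antisym)
    qed
    then show ?thesis using a0 by blast
  qed
  moreover have "a = a'" if "?P a" "?P a'" for a a'
    using that anc_antisym by blast
  ultimately have "\<exists>!a. ?P a" by blast
  from theI'[OF this] show ?thesis unfolding LCA_def .
qed

end

locale alg = tr +
  fixes E :: "nat set set" and out :: "nat \<Rightarrow> (nat \<times> nat) option"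
  assumes E: "E \<subseteq> {{x, y} | x y. x \<in> {1..n} \<and> y \<in> {1..n} \<and> x \<noteq> y}"
    and fp: "\<forall>w\<in>{1..n}. out w = process_out E par n out w"
begin

lemma cross_range: assumes "{u, v} \<in> cross_edges E par n" shows "u \<in> {1..n}" "v \<in> {1..n}"
proof -
  have "{u, v} \<in> E" using assms unfolding cross_edges_def by blast
  then obtain x y where "{u, v} = {x, y}" "x \<in> {1..n}" "y \<in> {1..n}" using E by blast
  then show "u \<in> {1..n}" "v \<in> {1..n}" by (auto simp: doubleton_eq_iff)
qed

lemma S_range: "(a, b) \<in> Sset E par n w \<Longrightarrow> a \<in> {1..n} \<and> b \<in> {1..n}"
  unfolding Sset_def using cross_range by blast

definition Inv where
  "Inv w \<longleftrightarrow> (out w = None \<longleftrightarrow> \<not> lv E par n w) \<and>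
     (\<forall>a b. out w = Some (a, b) \<longrightarrow> (\<exists>v'. (a, v') \<in> Sset E par n w) \<and> (\<exists>u'. (u', b) \<in> Sset E par n w) \<and>
        (\<forall>u v. (u, v) \<in> Sset E par n w \<and> \<not> (anc par w u \<and> anc par w v) \<longrightarrow> a \<le> u \<and> v \<le> b))"

lemma S_mono: assumes "c \<in> children par n w" shows "Sset E par n c \<subseteq> Sset E par n w"
  using child_props(4)[OF assms] anc_trans unfolding Sset_def by blast

lemma invariant: assumes "w \<in> {1..n}" shows "Inv w"
  using assms
proof (induction "n - w" arbitrary: w rule: less_induct)
  case less
  have IH: "Inv c" if "c \<in> children par n w" for c
    using less.hyps[of c] child_props[OF that] less.prems by force
  define M where "M = inbox E par n out w"
  have M1: "(\<exists>v'. (fst m, v') \<in> Sset E par n w) \<and> (\<exists>u'. (u', snd m) \<in> Sset E par n w)" if m: "m \<in> M" for m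
  proof -
    obtain a b where ab: "m = (a, b)" by (cases m)
    have "m \<in> {(u, v). {u, v} \<in> cross_edges E par n \<and> u < v \<and> (w = u \<or> w = v)}
      \<or> (\<exists>c\<in>children par n w. out c = Some m)" using m unfolding M_def inbox_def by blast
    then show ?thesis
    proof
      assume "m \<in> {(u, v). {u, v} \<in> cross_edges E par n \<and> u < v \<and> (w = u \<or> w = v)}"
      then have "m \<in> Sset E par n w" unfolding Sset_def using anc_refl by auto
      then show ?thesis using ab by auto
    next
      assume "\<exists>c\<in>children par n w. out c = Some m"
      then obtain c where c: "c \<in> children par n w" "out c = Some (a, b)" using ab by blast
      then show ?thesis using IH[OF c(1)] S_mono[OF c(1)] ab unfolding Inv_def by auto
    qed
  qed
  have M2: "\<exists>m\<in>M. fst m \<le> u \<and> v \<le> snd m"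
    if uv: "(u, v) \<in> Sset E par n w" "\<not> (anc par w u \<and> anc par w v)" for u v
  proof (cases "w = u \<or> w = v")
    case True
    then have "(u, v) \<in> M" using uv unfolding M_def inbox_def Sset_def by auto
    then show ?thesis by force
  next
    case False
    have rng: "u \<in> {1..n}" "v \<in> {1..n}" using S_range uv(1) by auto
    have "anc par w u \<or> anc par w v" using uv(1) unfolding Sset_def by auto
    then obtain c where c: "c \<in> children par n w" "anc par c u \<or> anc par c v"
      using child_exists False rng by metis
    have "(u, v) \<in> Sset E par n c" using uv(1) c(2) unfolding Sset_def by auto
    moreover have "\<not> (anc par c u \<and> anc par c v)"
      using uv(2) anc_trans child_props(4)[OF c(1)] by blast
    ultimately have "lv E par n c" unfolding lv_def by blast
    then obtain a b where ab: "out c = Some (a, b)" using IH[OF c(1)] unfolding Inv_def by auto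
    then have "a \<le> u \<and> v \<le> b" using IH[OF c(1)] unfolding Inv_def
      using \<open>(u, v) \<in> Sset E par n c\<close> \<open>\<not> (anc par c u \<and> anc par c v)\<close> by blast
    moreover have "(a, b) \<in> M" using ab c(1) unfolding M_def inbox_def by blast
    ultimately show ?thesis by force
  qed
  have fM: "finite M"
  proof -
    have "M \<subseteq> {1..n} \<times> {1..n}"
    proof
      fix m assume "m \<in> M"
      then show "m \<in> {1..n} \<times> {1..n}" using M1 S_range by (cases m) fastforce
    qed
    then show ?thesis using finite_subset by blast
  qed
  have ow: "out w = (if M = {} then None
      else (let umin = Min (fst ` M); vmax = Max (snd ` M) in
            if anc par w umin \<and> anc par w vmax then None else Some (umin, vmax)))"
    using fp less.prems unfolding process_out_def M_def Let_def by simp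
  show ?case
  proof (cases "M = {}")
    case True
    then have "\<not> lv E par n w" using M2 unfolding lv_def by blast
    then show ?thesis using ow True unfolding Inv_def by simp
  next
    case Mne: False
    define umin where "umin = Min (fst ` M)"
    define vmax where "vmax = Max (snd ` M)"
    have "umin \<in> fst ` M" unfolding umin_def using fM Mne by simp
    then obtain v' where v': "(umin, v') \<in> Sset E par n w" using M1 by force
    have "vmax \<in> snd ` M" unfolding vmax_def using fM Mne by simp
    then obtain u' where u': "(u', vmax) \<in> Sset E par n w" using M1 by force
    have ow2: "out w = (if anc par w umin \<and> anc par w vmax then None else Some (umin, vmax))"
      using ow Mne unfolding umin_def vmax_def Let_def by simp
    show ?thesis
    proof (cases "lv E par n w")
      case True
      then obtain u v where uv: "(u, v) \<in> Sset E par n w" "\<not> (anc par w u \<and> anc par w v)"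
        unfolding lv_def by blast
      have bnd: "umin \<le> u \<and> v \<le> vmax" if hh: "(u, v) \<in> Sset E par n w" "\<not> (anc par w u \<and> anc par w v)" for u v
      proof -
        obtain m where m: "m \<in> M" "fst m \<le> u" "v \<le> snd m" using M2[OF hh] by blast
        have "umin \<le> fst m" unfolding umin_def using fM m(1) by simp
        moreover have "snd m \<le> vmax" unfolding vmax_def using fM m(1) by simp
        ultimately show ?thesis using m by simp
      qed
      have "\<not> (anc par w umin \<and> anc par w vmax)"
      proof
        assume h: "anc par w umin \<and> anc par w vmax"
        have uvS: "{u, v} \<in> cross_edges E par n" "u < v" "anc par w u \<or> anc par w v"
          using uv(1) unfolding Sset_def by auto
        have rng: "u \<in> {1..n}" "v \<in> {1..n}" "umin \<in> {1..n}" "vmax \<in> {1..n}"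
          using S_range uv(1) v' u' by auto
        have b: "umin \<le> u" "v \<le> vmax" using bnd[OF uv] by auto
        show False
        proof (cases "anc par w u")
          case True
          then have "w \<le> u" using anc_le rng by blast
          then have "anc par w v" using convex[OF less.prems _ rng(4), of v] h b uvS(2) by simp
          then show False using True uv(2) by blast
        next
          case False
          then have av: "anc par w v" using uvS(3) by blast
          have "w \<le> umin" using h anc_le rng by blast
          then have "anc par w u" using convex[OF less.prems av rng(2), of u] b uvS(2) by simp
          then show False using False by blast
        qed
      qed
      then have os: "out w = Some (umin, vmax)" using ow2 by simp
      show ?thesis using True v' u' bnd by (auto simp: Inv_def os)
    next
      case False
      then have "anc par w umin \<and> anc par w vmax" using v' u' unfolding lv_def by blast
      then show ?thesis using ow2 False unfolding Inv_def by simp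
    qed
  qed
qed

end

theorem theorem6p2:
  fixes n :: nat and par :: "nat \<Rightarrow> nat" and E :: "nat set set"
    and out :: "nat \<Rightarrow> (nat \<times> nat) option"
  assumes "rooted_tree n par"
    and "preorder_labeled par n"
    and "E \<subseteq> {{x, y} | x y. x \<in> {1..n} \<and> y \<in> {1..n} \<and> x \<noteq> y}"
    and "tree_edges par n \<subseteq> E"
    and "\<forall>w\<in>{1..n}. out w = process_out E par n out w"
  shows "marked par n out =
    \<Union>{Chain par (LCA par n u v) u \<union> Chain par (LCA par n u v) v | u v.
        {u, v} \<in> cross_edges E par n \<and> u < v}"
proof -
  interpret alg n par E out using assms by unfold_locales auto
  have key: "out w \<noteq> None \<longleftrightarrow> lv E par n w" if "w \<in> {1..n}" for w
    using invariant[OF that] unfolding Inv_def by auto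
  show ?thesis
  proof (intro equalityI subsetI)
    fix e assume "e \<in> marked par n out"
    then obtain w where e: "e = {w, par w}" "w \<in> {1..n}" "out w \<noteq> None"
      unfolding marked_def by blast
    then have "lv E par n w" using key by blast
    then obtain u v where uv: "(u, v) \<in> Sset E par n w" "\<not> (anc par w u \<and> anc par w v)"
      unfolding lv_def by blast
    have cr: "{u, v} \<in> cross_edges E par n" "u < v" "anc par w u \<or> anc par w v"
      using uv(1) unfolding Sset_def by auto
    have rng: "u \<in> {1..n}" "v \<in> {1..n}" using cross_range cr(1) by auto
    define L where "L = LCA par n u v"
    have L: "L \<in> {1..n}" "anc par L u" "anc par L v"
      "\<forall>b\<in>{1..n}. anc par b u \<and> anc par b v \<longrightarrow> anc par b L"
      using lca_props[OF rng] unfolding L_def by auto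
    have e2: "e = {par w, w}" using e(1) by auto
    have "e \<in> Chain par L u \<union> Chain par L v"
    proof (cases "anc par w u")
      case True
      then have nv: "\<not> anc par w v" using uv(2) by blast
      have "anc par L w \<or> anc par w L" using anc_linear L(2) True by blast
      then have Lw: "anc par L w" using nv anc_trans L(3) by blast
      have "w \<noteq> L" using nv L(3) by blast
      then have "e \<in> Chain par L u" unfolding Chain_def using e2 Lw True by blast
      then show ?thesis by blast
    next
      case False
      then have av: "anc par w v" using cr(3) by blast
      have "anc par L w \<or> anc par w L" using anc_linear L(3) av by blast
      then have Lw: "anc par L w" using False anc_trans L(2) by blast
      have "w \<noteq> L" using False L(2) by blast
      then have "e \<in> Chain par L v" unfolding Chain_def using e2 Lw av by blast
      then show ?thesis by blast
    qed
    then show "e \<in> \<Union>{Chain par (LCA par n u v) u \<union> Chain par (LCA par n u v) v | u v.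
        {u, v} \<in> cross_edges E par n \<and> u < v}" using cr unfolding L_def by blast
  next
    fix e assume "e \<in> \<Union>{Chain par (LCA par n u v) u \<union> Chain par (LCA par n u v) v | u v.
        {u, v} \<in> cross_edges E par n \<and> u < v}"
    then obtain u v where cr: "{u, v} \<in> cross_edges E par n" "u < v"
      and e: "e \<in> Chain par (LCA par n u v) u \<union> Chain par (LCA par n u v) v" by blast
    have rng: "u \<in> {1..n}" "v \<in> {1..n}" using cross_range cr(1) by auto
    define L where "L = LCA par n u v"
    have L: "L \<in> {1..n}" "anc par L u" "anc par L v"
      "\<forall>b\<in>{1..n}. anc par b u \<and> anc par b v \<longrightarrow> anc par b L"
      using lca_props[OF rng] unfolding L_def by auto
    obtain x where x: "e = {par x, x}" "anc par L x" "x \<noteq> L" "anc par x u \<or> anc par x v"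
      using e unfolding Chain_def L_def by blast
    have xr: "x \<in> {1..n}" using x(4) anc_le rng by blast
    have "(u, v) \<in> Sset E par n x" using cr x(4) unfolding Sset_def by auto
    moreover have "\<not> (anc par x u \<and> anc par x v)"
    proof
      assume "anc par x u \<and> anc par x v"
      then have "anc par x L" using L(4) xr by blast
      then show False using anc_antisym[OF x(2) _ xr] x(3) by blast
    qed
    ultimately have "lv E par n x" unfolding lv_def by blast
    then have "out x \<noteq> None" using key xr by blast
    moreover have "e = {x, par x}" using x(1) by auto
    ultimately show "e \<in> marked par n out" unfolding marked_def using xr by blast
  qed
qed

end
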